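(* For every $\rho$ with $\frac32<\rho<2$ there exists $a$ with $\frac12<a<1$ such that $${}_1F_2\left(a\,;\rho a,\,\rho a+\tfrac12\,;-\tfrac{x^2}{4}\right)>0\quad\text{for all } x>0.$$
   Context: For $a,b,c>0$, ${}_1F_2\left(a\,;b,c\,;-\frac{x^2}{4}\right)=\sum_{k=0}^\infty \frac{(a)_k}{k!\,(b)_k(c)_k}\left(-\frac{x^2}{4}\right)^k$, where $(\alpha)_k=\Gamma(\alpha+k)/\Gamma(\alpha)$. *)

theory Defs
  imports "HOL-Analysis.Analysis"
begin

definition hyp1F2 :: "real \<Rightarrow> real \<Rightarrow> real \<Rightarrow> real \<Rightarrow> real" where
  "hyp1F2 a b c z = (\<Sum>k. pochhammer a k / (fact k * pochhammer b k * pochhammer c k) * z ^ k)"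

end

theory Submission
  imports Defs
begin


lemma Beta_pos_real: "(p::real) > 0 \<Longrightarrow> q > 0 \<Longrightarrow> Beta p q > 0"
  by (simp add: Beta_def Gamma_real_pos)

lemma beta_mix:
  fixes c :: "nat \<Rightarrow> real" and p q :: real and n :: nat
  assumes p: "p > 0" and q: "q > 0" and sc: "summable (\<lambda>k. \<bar>c k\<bar>)"
  shows "integrable lborel (\<lambda>t. indicator {0..1} t * (t powr (p-1) * (1-t) powr (q-1)) * (\<Sum>k. c k * t^(n*k)))"
    and "(\<Sum>k. c k * Beta (p + real (n*k)) q) = (\<integral>t. indicator {0..1} t * (t powr (p-1) * (1-t) powr (q-1)) * (\<Sum>k. c k * t^(n*k)) \<partial>lborel)"
proof -
  define w where "w = (\<lambda>t::real. t powr (p-1) * (1-t) powr (q-1))"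
  define h where "h = (\<lambda>k t::real. indicator {0..1} t * (t powr (p + real(n*k) - 1) * (1-t) powr (q-1)))"
  define f where "f = (\<lambda>k t. c k * h k t)"
  have pw: "t powr (p + real(n*k) - 1) = t^(n*k) * t powr (p-1)" if "t \<ge> 0" for t :: real and k
  proof (cases "t = 0")
    case False
    then have "t powr (p + real(n*k) - 1) = t powr (real (n*k)) * t powr (p-1)"
      by (simp add: powr_add[symmetric] algebra_simps)
    moreover have "t powr (real (n*k)) = t^(n*k)" using False that by (simp add: powr_realpow del: of_nat_mult)
    ultimately show ?thesis by simp
  qed simp
  have fk: "f k t = indicator {0..1} t * w t * (c k * t^(n*k))" for k t
  proof (cases "t \<in> {0..1}")
    case True
    then have "t \<ge> 0" by simp
    from pw[OF this, of k] True show ?thesis by (simp add: f_def h_def w_def mult_ac del: of_nat_mult)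
  qed (simp add: f_def h_def w_def)
  have hnn: "h k t \<ge> 0" for k t by (simp add: h_def)
  have hint: "integrable lborel (h k)" for k
  proof -
    have "0 < p + real (n*k)" using p by (simp add: add_pos_nonneg del: of_nat_mult)
    with integrable_Beta[of "p + real (n*k)" q] q show ?thesis
      by (simp add: set_integrable_def h_def del: of_nat_mult)
  qed
  have hval: "integral\<^sup>L lborel (h k) = Beta (p + real (n*k)) q" for k
  proof -
    have si: "set_integrable lborel {0..1} (\<lambda>t. t powr (p + real (n*k) - 1) * (1-t) powr (q-1))"
      using integrable_Beta[of "p + real (n*k)" q] p q by (simp del: of_nat_mult add: add_pos_nonneg)
    have "integral\<^sup>L lborel (h k) = (LINT t:{0..1}|lborel. t powr (p + real (n*k) - 1) * (1-t) powr (q-1))"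
      by (simp add: set_lebesgue_integral_def h_def)
    also have "\<dots> = integral {0..1} (\<lambda>t. t powr (p + real (n*k) - 1) * (1-t) powr (q-1))"
      by (rule set_borel_integral_eq_integral(2)[OF si])
    also have "\<dots> = Beta (p + real (n*k)) q"
      using has_integral_Beta_real[of "p + real (n*k)" q] p q by (simp add: integral_unique add_pos_nonneg del: of_nat_mult)
    finally show ?thesis .
  qed
  have fint: "integrable lborel (f k)" for k
    unfolding f_def by (intro integrable_mult_right hint)
  have wnn: "0 \<le> indicator {0..1} t * w t" for t by (simp add: w_def)
  have nb: "norm (f k t) \<le> \<bar>c k\<bar> * (indicator {0..1} t * w t)" for k t
  proof (cases "t \<in> {0..1}")
    case True
    then have "\<bar>t^(n*k)\<bar> \<le> 1" by (simp add: power_le_one power_abs)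
    then have "\<bar>c k\<bar> * \<bar>t^(n*k)\<bar> * w t \<le> \<bar>c k\<bar> * 1 * w t"
      by (intro mult_right_mono mult_left_mono) (auto simp: w_def)
    then show ?thesis using True by (simp add: fk abs_mult w_def mult_ac)
  qed (simp add: fk)
  have sAE: "AE t in lborel. summable (\<lambda>k. norm (f k t))"
    by (intro AE_I2 summable_comparison_test'[OF summable_mult2[OF sc]] ) (use nb in auto)
  have nf: "(\<integral>t. norm (f k t) \<partial>lborel) = \<bar>c k\<bar> * Beta (p + real (n*k)) q" for k
  proof -
    have "(\<lambda>t. norm (f k t)) = (\<lambda>t. \<bar>c k\<bar> * h k t)"
      by (auto simp: f_def abs_mult hnn)
    then show ?thesis by (simp add: hval)
  qed
  have sI: "summable (\<lambda>k. (\<integral>t. norm (f k t) \<partial>lborel))"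
  proof (rule summable_comparison_test'[OF summable_mult2[OF sc, of "Beta p q"]])
    fix k
    have "Beta (p + real (n*k)) q \<le> Beta p q" by (rule Beta_real_mono) (use p q in auto)
    moreover have "0 \<le> Beta (p + real (n*k)) q"
      using p q by (intro less_imp_le Beta_pos_real) (auto simp: add_pos_nonneg simp del: of_nat_mult)
    ultimately show "norm (\<integral>t. norm (f k t) \<partial>lborel) \<le> \<bar>c k\<bar> * Beta p q"
      unfolding nf by (simp add: abs_mult mult_left_mono del: of_nat_mult)
  qed
  have sumeq: "(\<Sum>k. f k t) = indicator {0..1} t * w t * (\<Sum>k. c k * t^(n*k))" for t
  proof (cases "t \<in> {0..1}")
    case True
    have "summable (\<lambda>k. c k * t^(n*k))"
    proof (rule summable_comparison_test'[OF sc])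
      fix k show "norm (c k * t^(n*k)) \<le> \<bar>c k\<bar>"
        using True by (simp add: abs_mult power_abs power_le_one mult_left_le)
    qed
    then show ?thesis unfolding fk by (rule suminf_mult)
  qed (simp add: fk)
  show "integrable lborel (\<lambda>t. indicator {0..1} t * (t powr (p-1) * (1-t) powr (q-1)) * (\<Sum>k. c k * t^(n*k)))"
    using integrable_suminf[OF fint sAE sI] by (simp add: sumeq w_def)
  have "(\<Sum>k. c k * Beta (p + real (n*k)) q) = (\<Sum>k. integral\<^sup>L lborel (f k))"
    by (simp add: f_def hval)
  also have "\<dots> = (\<integral>t. (\<Sum>k. f k t) \<partial>lborel)"
    by (rule integral_suminf[OF fint sAE sI, symmetric])
  finally show "(\<Sum>k. c k * Beta (p + real (n*k)) q) = (\<integral>t. indicator {0..1} t * (t powr (p-1) * (1-t) powr (q-1)) * (\<Sum>k. c k * t^(n*k)) \<partial>lborel)"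
    by (simp add: sumeq w_def)
qed



lemma integral_pos_interval:
  fixes g :: "real \<Rightarrow> real"
  assumes gi: "integrable lborel g" and nn: "\<And>t. g t \<ge> 0" and e: "\<epsilon> > 0"
    and pos: "\<And>t. 0 < t \<Longrightarrow> t < \<epsilon> \<Longrightarrow> g t > 0"
  shows "integral\<^sup>L lborel g > 0"
proof -
  have "integral\<^sup>L lborel g \<ge> 0" using nn by (simp add: integral_nonneg)
  moreover have "integral\<^sup>L lborel g \<noteq> 0"
  proof
    assume "integral\<^sup>L lborel g = 0"
    then have "AE t in lborel. g t = 0" using integral_nonneg_eq_0_iff_AE[OF gi] nn by auto
    then obtain N where N: "{t \<in> space lborel. \<not> g t = 0} \<subseteq> N" "emeasure lborel N = 0" "N \<in> sets lborel"
      by (rule AE_E)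
    have "{0<..<\<epsilon>} \<subseteq> N" using N(1) pos by force
    then have "emeasure lborel {0<..<\<epsilon>} \<le> emeasure lborel N" by (rule emeasure_mono) (use N in auto)
    then show False using N(2) e by simp
  qed
  ultimately show ?thesis by simp
qed

lemma Beta_shift:
  fixes p q :: real
  assumes "p > 0" "q > 0"
  shows "Beta (p + real m) q = Beta p q * pochhammer p m / pochhammer (p+q) m"
proof -
  have np: "p \<notin> \<int>\<^sub>\<le>\<^sub>0" "p + q \<notin> \<int>\<^sub>\<le>\<^sub>0" using assms by (auto dest: nonpos_Ints_nonpos)
  have g: "Gamma p > 0" "Gamma q > 0" "Gamma (p+q) > 0" "Gamma (p + q + real m) > 0" "Gamma (p + real m) > 0"
    using assms by (auto intro!: Gamma_real_pos add_pos_nonneg)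
  show ?thesis unfolding Beta_def pochhammer_Gamma[OF np(1)] pochhammer_Gamma[OF np(2)]
    using g by (simp add: field_simps)
qed

lemma fact_le_pochhammer: "(b::real) \<ge> 1 \<Longrightarrow> fact m \<le> pochhammer b m"
proof (induction m)
  case (Suc m)
  have "fact (Suc m) = fact m * (1 + real m)" by (simp add: algebra_simps)
  also have "\<dots> \<le> pochhammer b m * (b + real m)"
    using Suc by (intro mult_mono) (auto simp: pochhammer_nonneg)
  finally show ?case by (simp add: pochhammer_Suc)
qed simp

lemma pochhammer_le_fact: "0 \<le> (a::real) \<Longrightarrow> a \<le> 1 \<Longrightarrow> pochhammer a m \<le> fact m"
proof (induction m)
  case (Suc m)
  have "pochhammer a (Suc m) = pochhammer a m * (a + real m)" by (simp add: pochhammer_Suc)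
  also have "\<dots> \<le> fact m * (1 + real m)"
    using Suc by (intro mult_mono) (auto simp: pochhammer_nonneg)
  finally show ?case by (simp add: algebra_simps)
qed simp

lemma pochhammer3: "pochhammer (3::real) m * 2 = fact (m+2)"
proof (induction m)
  case 0 then show ?case by simp
next
  case (Suc m)
  have "pochhammer (3::real) (Suc m) * 2 = (pochhammer 3 m * 2) * (3 + real m)"
    by (simp add: pochhammer_Suc)
  also have "\<dots> = fact (m+2) * (3 + real m)" using Suc by simp
  also have "\<dots> = fact (Suc m + 2)" by (simp add: algebra_simps)
  finally show ?case .
qed

lemma cos_series:
  fixes z :: real assumes "z \<noteq> 0"
  shows "(\<lambda>k. (-(z^2))^k / pochhammer 3 (2*k)) sums (2*(1 - cos z)/z^2)"
proof -
  define f where "f = (\<lambda>n. (- 1) ^ n / (fact (2 * n)) * z ^ (2 * n) :: real)"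
  have "f sums cos z" unfolding f_def by (rule cos_paired)
  then have "(\<lambda>n. f (Suc n)) sums (cos z - 1)"
    by (subst sums_Suc_iff) (simp add: f_def)
  then have "(\<lambda>n. (-2/z^2) * f (Suc n)) sums ((-2/z^2) * (cos z - 1))"
    by (rule sums_mult)
  moreover have "(-2/z^2) * f (Suc n) = (-(z^2))^n / pochhammer 3 (2*n)" for n
  proof -
    have P: "pochhammer (3::real) (2*n) = fact (2*n+2) / 2" using pochhammer3[of "2*n"] by simp
    have e1: "(-(z^2))^n = (-1)^n * z^(2*n)"
    proof -
      have "(-(z^2))^n = ((-1) * z^2)^n" by simp
      also have "\<dots> = (-1)^n * (z^2)^n" by (rule power_mult_distrib)
      also have "(z^2)^n = z^(2*n)" by (rule power_mult[symmetric])
      finally show ?thesis .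
    qed
    have e2: "f (Suc n) = - ((-1)^n / fact (2*n+2) * (z^2 * z^(2*n)))"
    proof -
      have i: "2 * Suc n = 2*n+2" by simp
      have "f (Suc n) = (-1)^(Suc n) / fact (2*n+2) * z^(2*n+2)" unfolding f_def i ..
      also have "\<dots> = - ((-1)^n / fact (2*n+2) * (z^2 * z^(2*n)))"
        by (simp only: power_Suc power_add) (simp add: mult_ac)
      finally show ?thesis .
    qed
    define F where "F = (fact (2*n+2) :: real)"
    define w where "w = z^(2*n)"
    have F: "F > 0" by (simp add: F_def)
    have "(-2/z^2) * (- ((-1)^n / F * (z^2 * w))) = (-1)^n * w / (F / 2)"
      using F assms by (simp add: field_simps)
    then show ?thesis unfolding e1 e2 P F_def[symmetric] w_def[symmetric] .
  qed
  moreover have "(-2/z^2) * (cos z - 1) = 2*(1 - cos z)/z^2" by (simp add: divide_simps)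
  ultimately show ?thesis by simp
qed


lemma PsiU_pos:
  fixes b s :: real
  assumes b: "b > 3/2" and s: "s \<ge> 0"
  shows "(\<Sum>k. (-s)^k / pochhammer (2*b) (2*k)) > 0"
proof (cases "s = 0")
  case True
  have "(\<lambda>k. (-s)^k / pochhammer (2*b) (2*k)) = (\<lambda>k. (1 / pochhammer (2*b) (2*k)) * 0^k)"
    using True by (auto simp: fun_eq_iff)
  then have "(\<Sum>k. (-s)^k / pochhammer (2*b) (2*k)) = (\<Sum>k. (1 / pochhammer (2*b) (2*k)) * 0^k)"
    by (simp only:)
  also have "\<dots> = 1 / pochhammer (2*b) (2*0)" by (rule powser_zero)
  finally show ?thesis by simp
next
  case False
  with s have s0: "s > 0" by simp
  define c where "c = (\<lambda>k. (-s)^k / pochhammer (3::real) (2*k))"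
  have pc: "pochhammer (3::real) (2*k) \<ge> fact k" for k
  proof -
    have "fact k \<le> (fact (2*k) :: real)" by (intro fact_mono) auto
    also have "\<dots> \<le> pochhammer 3 (2*k)" by (rule fact_le_pochhammer) simp
    finally show ?thesis .
  qed
  have pb: "pochhammer (2*b) (2*k) \<ge> fact k" for k
  proof -
    have "fact k \<le> (fact (2*k) :: real)" by (intro fact_mono) auto
    also have "\<dots> \<le> pochhammer (2*b) (2*k)" by (rule fact_le_pochhammer) (use b in simp)
    finally show ?thesis .
  qed
  have se: "summable (\<lambda>k. s^k / fact k)"
    using summable_exp[of s] by (simp add: divide_inverse mult_ac)
  have sc: "summable (\<lambda>k. \<bar>c k\<bar>)"
  proof (rule summable_comparison_test'[OF se])
    fix k
    have "s^k / pochhammer 3 (2*k) \<le> s^k / fact k"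
      using pc[of k] s by (intro divide_left_mono) (auto intro!: mult_pos_pos pochhammer_pos)
    then show "norm \<bar>c k\<bar> \<le> s^k / fact k"
      using s by (simp add: c_def abs_divide power_abs pochhammer_nonneg)
  qed
  have sPsi: "summable (\<lambda>k. (-s)^k / pochhammer (2*b) (2*k))"
  proof (rule summable_comparison_test'[OF se])
    fix k
    have "s^k / pochhammer (2*b) (2*k) \<le> s^k / fact k"
      using pb[of k] s b by (intro divide_left_mono) (auto intro!: mult_pos_pos pochhammer_pos)
    then show "norm ((-s)^k / pochhammer (2*b) (2*k)) \<le> s^k / fact k"
      using s b by (simp add: abs_divide power_abs pochhammer_nonneg)
  qed
  have p3: "(3::real) > 0" and q: "2*b - 3 > 0" using b by auto
  note BM = beta_mix[OF p3 q sc, of 2]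
  define g where "g = (\<lambda>t. indicator {0..1} t * (t powr (3-1) * (1-t) powr (2*b-3-1)) * (\<Sum>k. c k * t^(2*k)))"
  have lhs: "(\<Sum>k. c k * Beta (3 + real (2*k)) (2*b-3)) = Beta 3 (2*b-3) * (\<Sum>k. (-s)^k / pochhammer (2*b) (2*k))"
  proof -
    have "c k * Beta (3 + real (2*k)) (2*b-3) = Beta 3 (2*b-3) * ((-s)^k / pochhammer (2*b) (2*k))" for k
    proof -
      have "pochhammer (3::real) (2*k) > 0" by (rule pochhammer_pos) simp
      moreover have "pochhammer (2*b) (2*k) > 0" by (rule pochhammer_pos) (use b in simp)
      ultimately show ?thesis
        unfolding Beta_shift[OF p3 q] c_def by (simp add: field_simps)
    qed
    then show ?thesis using suminf_mult[OF sPsi, of "Beta 3 (2*b-3)"] by simp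
  qed
  have E: "(\<Sum>k. c k * t^(2*k)) = 2*(1 - cos (sqrt s * t))/(sqrt s * t)^2" if "t \<noteq> 0" for t
  proof -
    have z: "sqrt s * t \<noteq> 0" using that s0 by simp
    have "(\<lambda>k. c k * t^(2*k)) = (\<lambda>k. (-((sqrt s * t)^2))^k / pochhammer 3 (2*k))"
    proof
      fix k
      have "(sqrt s * t)^2 = s * t^2" using s by (simp add: power_mult_distrib)
      moreover have "(-(s * t^2))^k = (-s)^k * t^(2*k)"
      proof -
        have "(-(s * t^2))^k = ((-s) * t^2)^k" by simp
        also have "\<dots> = (-s)^k * (t^2)^k" by (rule power_mult_distrib)
        also have "(t^2)^k = t^(2*k)" by (rule power_mult[symmetric])
        finally show ?thesis .
      qed
      ultimately show "c k * t^(2*k) = (-((sqrt s * t)^2))^k / pochhammer 3 (2*k)"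
        by (simp add: c_def)
    qed
    then show ?thesis using cos_series[OF z] by (simp add: sums_iff)
  qed
  have E0: "(\<Sum>k. c k * t^(2*k)) = 1" if "t = 0" for t
  proof -
    have "(\<lambda>k. c k * t^(2*k)) = (\<lambda>k. c k * 0^k)" using that by (auto simp: fun_eq_iff power_mult)
    then have "(\<Sum>k. c k * t^(2*k)) = (\<Sum>k. c k * 0^k)" by (simp only:)
    also have "\<dots> = c 0" by (rule powser_zero)
    finally show ?thesis by (simp add: c_def)
  qed
  have Enn: "(\<Sum>k. c k * t^(2*k)) \<ge> 0" for t
    by (cases "t = 0") (auto simp: E E0 intro!: divide_nonneg_pos)
  have gnn: "g t \<ge> 0" for t unfolding g_def using Enn[of t] by auto
  have gpos: "g t > 0" if "0 < t" "t < 1/(s+1)" for t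
  proof -
    have t1: "t < 1" using that s0 by (smt (verit) divide_less_eq_1_pos)
    have "t * (s+1) < 1" using that s0 by (simp add: field_simps)
    then have "s * (t * (s+1)) < s * 1" using s0 by (intro mult_strict_left_mono) auto
    then have "s * t < s / (s+1)" using s0 by (simp add: field_simps)
    also have "\<dots> < 1" using s0 by simp
    finally have st: "s * t < 1" .
    have "(sqrt s * t)^2 = s * t * t" using s by (simp add: power_mult_distrib power2_eq_square)
    also have "\<dots> \<le> s * t" using that t1 s0 by (simp add: mult_left_le)
    finally have "(sqrt s * t)^2 < 1" using st by simp
    then have zl: "sqrt s * t < 1" by (smt (verit) one_le_power)
    have zp: "sqrt s * t > 0" using that s0 by simp
    have "cos (sqrt s * t) < cos 0" by (rule cos_monotone_0_pi) (use zl zp pi_gt3 in auto)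
    then have "2*(1 - cos (sqrt s * t))/(sqrt s * t)^2 > 0" using zp by (intro divide_pos_pos) auto
    then have "(\<Sum>k. c k * t^(2*k)) > 0" using E[of t] that by simp
    then show ?thesis unfolding g_def using that t1 by simp
  qed
  have "integral\<^sup>L lborel g > 0"
    by (rule integral_pos_interval[OF _ gnn _ gpos]) (use BM(1) s in \<open>auto simp: g_def\<close>)
  then have "Beta 3 (2*b-3) * (\<Sum>k. (-s)^k / pochhammer (2*b) (2*k)) > 0"
    using BM(2) lhs by (simp add: g_def)
  moreover have "Beta 3 (2*b-3) > 0" using Beta_pos_real[OF p3 q] .
  ultimately show ?thesis by (simp add: zero_less_mult_iff)
qed

lemma hyp_pos:
  fixes a b x :: real
  assumes a0: "0 < a" and a1: "a < 1" and b: "b > 3/2"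
  shows "hyp1F2 a b (b + 1/2) (-(x^2)/4) > 0"
proof -
  define y where "y = x^2/4"
  have y: "y \<ge> 0" by (simp add: y_def)
  define P where "P = (\<lambda>k. pochhammer b k * pochhammer (b+1/2) k)"
  have Ppos: "P k > 0" for k using b by (simp add: P_def pochhammer_pos)
  have Pf: "fact k \<le> P k" for k
  proof -
    have "fact k * 1 \<le> pochhammer b k * pochhammer (b+1/2) k"
    proof (rule mult_mono)
      show "fact k \<le> pochhammer b k" by (rule fact_le_pochhammer) (use b in simp)
      have "(1::real) \<le> fact k" by simp
      also have "\<dots> \<le> pochhammer (b+1/2) k" by (rule fact_le_pochhammer) (use b in simp)
      finally show "1 \<le> pochhammer (b+1/2) k" .
    qed (use b in \<open>auto simp: pochhammer_nonneg\<close>)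
    then show ?thesis by (simp add: P_def)
  qed
  define c where "c = (\<lambda>k. (-y)^k / P k)"
  have se: "summable (\<lambda>k. y^k / fact k)"
    using summable_exp[of y] by (simp add: divide_inverse mult_ac)
  have cb: "\<bar>c k\<bar> \<le> y^k / fact k" for k
  proof -
    have "y^k / P k \<le> y^k / fact k"
      using Pf[of k] y by (intro divide_left_mono) (auto intro!: mult_pos_pos Ppos)
    then show ?thesis using y Ppos[of k] by (simp add: c_def abs_divide power_abs)
  qed
  have sc: "summable (\<lambda>k. \<bar>c k\<bar>)"
    by (rule summable_comparison_test'[OF se]) (use cb in simp)
  define T where "T = (\<lambda>k. pochhammer a k / (fact k * pochhammer b k * pochhammer (b+1/2) k) * (-(x^2)/4)^k)"
  have Tc: "T k = c k * (pochhammer a k / fact k)" for k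
    using Ppos[of k] by (simp add: T_def c_def P_def y_def field_simps)
  have sT: "summable T"
  proof (rule summable_comparison_test'[OF sc])
    fix k
    have "0 \<le> pochhammer a k / fact k" using a0 by (simp add: pochhammer_nonneg)
    moreover have "pochhammer a k / fact k \<le> 1" using pochhammer_le_fact[of a k] a0 a1 by simp
    ultimately have "\<bar>c k\<bar> * (pochhammer a k / fact k) \<le> \<bar>c k\<bar> * 1"
      by (intro mult_left_mono) auto
    moreover have "norm (T k) = \<bar>c k\<bar> * (pochhammer a k / fact k)"
      using a0 by (simp add: Tc abs_mult pochhammer_nonneg)
    ultimately show "norm (T k) \<le> \<bar>c k\<bar>" by simp
  qed
  have q: "1 - a > 0" using a1 by simp
  note BM = beta_mix[OF a0 q sc, of 1]
  have lhs: "(\<Sum>k. c k * Beta (a + real (1*k)) (1-a)) = Beta a (1-a) * hyp1F2 a b (b + 1/2) (-(x^2)/4)"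
  proof -
    have "c k * Beta (a + real (1*k)) (1-a) = Beta a (1-a) * T k" for k
      using Beta_shift[OF a0 q, of k] by (simp add: Tc pochhammer_fact)
    then show ?thesis using suminf_mult[OF sT, of "Beta a (1-a)"]
      by (simp add: hyp1F2_def T_def)
  qed
  have inner: "(\<Sum>k. c k * t^(1*k)) > 0" if "t \<ge> 0" for t
  proof -
    have "c k * t^(1*k) = (-(x^2*t))^k / pochhammer (2*b) (2*k)" for k
    proof -
      have "pochhammer (2*b) (2*k) = 4^k * P k"
        using pochhammer_double[of b k] by (simp add: P_def power_mult)
      moreover have "(-(x^2*t))^k = (-y)^k * 4^k * t^k"
      proof -
        have "-(x^2*t) = (-y) * 4 * t" by (simp add: y_def)
        then have "(-(x^2*t))^k = ((-y) * 4 * t)^k" by (simp only:)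
        also have "\<dots> = (-y)^k * 4^k * t^k" by (simp only: power_mult_distrib)
        finally show ?thesis .
      qed
      ultimately show ?thesis using Ppos[of k] by (simp add: c_def)
    qed
    then have "(\<Sum>k. c k * t^(1*k)) = (\<Sum>k. (-(x^2*t))^k / pochhammer (2*b) (2*k))" by simp
    also have "\<dots> > 0" by (rule PsiU_pos[OF b]) (use that in simp)
    finally show ?thesis .
  qed
  define g where "g = (\<lambda>t. indicator {0..1} t * (t powr (a-1) * (1-t) powr (1-a-1)) * (\<Sum>k. c k * t^(1*k)))"
  have gnn: "g t \<ge> 0" for t
    unfolding g_def using inner[of t] by (auto simp: indicator_def less_imp_le)
  have gpos: "g t > 0" if "0 < t" "t < 1" for t
    unfolding g_def using inner[of t] that by simp
  have "integral\<^sup>L lborel g > 0"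
    by (rule integral_pos_interval[OF _ gnn _ gpos]) (use BM(1) in \<open>auto simp: g_def\<close>)
  then have "Beta a (1-a) * hyp1F2 a b (b + 1/2) (-(x^2)/4) > 0"
    using BM(2) lhs by (simp add: g_def)
  moreover have "Beta a (1-a) > 0" using Beta_pos_real[OF a0 q] .
  ultimately show ?thesis by (simp add: zero_less_mult_iff)
qed

theorem corollary1:
  fixes \<rho> :: real
  assumes "3/2 < \<rho>" and "\<rho> < 2"
  shows "\<exists>a::real. 1/2 < a \<and> a < 1 \<and>
           (\<forall>x::real. x > 0 \<longrightarrow> hyp1F2 a (\<rho> * a) (\<rho> * a + 1/2) (- (x^2) / 4) > 0)"
proof -
  define b where "b = (3/2 + \<rho>) / 2"
  define a where "a = b / \<rho>"
  have b1: "b > 3/2" "b < \<rho>" using assms by (auto simp: b_def)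
  have ab: "\<rho> * a = b" using assms by (simp add: a_def)
  have "a < 1" using b1 assms by (simp add: a_def)
  moreover have "1/2 < a" using b1 assms by (simp add: a_def field_simps)
  moreover have "hyp1F2 a (\<rho> * a) (\<rho> * a + 1/2) (- (x^2) / 4) > 0" for x
    unfolding ab by (rule hyp_pos) (use b1 \<open>1/2 < a\<close> \<open>a < 1\<close> in auto)
  ultimately show ?thesis by blast
qed

end
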